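(* Let $\varphi : X\to X$ be a morphism in $\mathscr{C}$ with kernel $\kappa : K\to X$ and cokernel $\lambda : X\to L$. The following are equivalent: (1) $\varphi$ is both core invertible and dual core invertible; (2) $\varphi$ is both Moore–Penrose invertible and group invertible; (3) $\varphi$ is regular and $\kappa\lambda : K\to L$, $\kappa\kappa^{*} : K\to K$ and $\lambda^{*}\lambda : L\to L$ are all invertible. In this case, for every $\psi : X\to X$ with $\varphi\psi\varphi=\varphi$, $$\varphi^{\dagger}=[1_X-\lambda(\lambda^{*}\lambda)^{-1}\lambda^{*}]\psi[1_X-\kappa^{*}(\kappa\kappa^{*})^{-1}\kappa],$$ $$\varphi^{\#}=[1_X-\lambda(\kappa\lambda)^{-1}\kappa]\psi[1_X-\lambda(\kappa\lambda)^{-1}\kappa],$$ $$\varphi^{\mathrm{core}}=[1_X-\lambda(\kappa\lambda)^{-1}\kappa]\psi[1_X-\kappa^{*}(\kappa\kappa^{*})^{-1}\kappa],$$ $$\varphi_{\mathrm{core}}=[1_X-\lambda(\lambda^{*}\lambda)^{-1}\lambda^{*}]\psi[1_X-\lambda(\kappa\lambda)^{-1}\kappa].$$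
   Context: $\mathscr{C}$ is an additive category with an involution $*$: a map on morphisms sending $\varphi : X\to Y$ to $\varphi^* : Y \to X$ such that $(\varphi^* )^*=\varphi$, $(\varphi\psi)^*=\psi^*\varphi^*$ and $(\varphi+\phi)^*=\varphi^*+\phi^*$. Composition is written left to right: for $\varphi : X\to Y$ and $\psi : Y\to Z$, $\varphi\psi : X \to Z$ means "first $\varphi$, then $\psi$". A kernel of $\varphi : X\to Y$ is a morphism $\kappa : K\to X$ with $\kappa\varphi=0$ such that every $\alpha : M\to X$ with $\alpha\varphi=0$ factors uniquely as $\alpha=\alpha'\kappa$. A cokernel of $\varphi$ is a morphism $\lambda : Y\to L$ with $\varphi\lambda=0$ such that every $\beta : Y\to M$ with $\varphi\beta=0$ factors uniquely as $\beta=\lambda\beta'$. $\varphi$ is regular if there is $\chi$ with $\varphi\chi\varphi=\varphi$. A morphism is invertible if it has a two-sided inverse. For $\varphi : X\to X$ the following are defined. - The Moore–Penrose inverse $\varphi^\dagger$ is the unique $\chi$ with $\varphi\chi\varphi=\varphi$, $\chi\varphi\chi=\chi$, $(\varphi\chi)^*=\varphi\chi$ and $(\chi\varphi)^*=\chi\varphi$. - The group inverse $\varphi^{\#}$ is the unique $\chi$ with $\varphi\chi\varphi=\varphi$, $\chi\varphi\chi=\chi$ and $\varphi\chi=\chi\varphi$. - The core inverse $\varphi^{\mathrm{core}}$ is the unique $\chi$ with $(\varphi\chi)^*=\varphi\chi$, $\varphi\chi^2=\chi$ and $\chi\varphi^2=\varphi$. - The dual core inverse $\varphi_{\mathrm{core}}$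 is the unique $\chi$ with $(\chi\varphi)^*=\chi\varphi$, $\chi^2\varphi=\chi$ and $\varphi^2\chi=\varphi$. *)

theory Defs
  imports Main
begin

text \<open>An additive category with involution, with composition written left to right:
  cmp f g means "first f, then g".  Objects of type 'o, morphisms of type 'm.\<close>

record ('o, 'm) icat =
  Ob   :: "'o set"
  Mor  :: "'m set"
  Dom  :: "'m \<Rightarrow> 'o"
  Cod  :: "'m \<Rightarrow> 'o"
  cmp  :: "'m \<Rightarrow> 'm \<Rightarrow> 'm"
  idt  :: "'o \<Rightarrow> 'm"
  pls  :: "'m \<Rightarrow> 'm \<Rightarrow> 'm"
  ngt  :: "'m \<Rightarrow> 'm"
  zro  :: "'o \<Rightarrow> 'o \<Rightarrow> 'm"
  str  :: "'m \<Rightarrow> 'm"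

definition Hom :: "('o, 'm, 'x) icat_scheme \<Rightarrow> 'o \<Rightarrow> 'o \<Rightarrow> 'm set" where
  "Hom C X Y = {f \<in> Mor C. Dom C f = X \<and> Cod C f = Y}"

definition mns :: "('o, 'm, 'x) icat_scheme \<Rightarrow> 'm \<Rightarrow> 'm \<Rightarrow> 'm" where
  "mns C f g = pls C f (ngt C g)"

definition is_zero_object :: "('o, 'm, 'x) icat_scheme \<Rightarrow> 'o \<Rightarrow> bool" where
  "is_zero_object C Z \<longleftrightarrow> Z \<in> Ob C \<and>
     (\<forall>X\<in>Ob C. (\<exists>!f. f \<in> Hom C Z X) \<and> (\<exists>!f. f \<in> Hom C X Z))"

definition is_biproduct ::
  "('o, 'm, 'x) icat_scheme \<Rightarrow> 'o \<Rightarrow> 'o \<Rightarrow> 'o \<Rightarrow> 'm \<Rightarrow> 'm \<Rightarrow> 'm \<Rightarrow> 'm \<Rightarrow> bool" where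
  "is_biproduct C A B S i1 i2 p1 p2 \<longleftrightarrow> S \<in> Ob C \<and>
     i1 \<in> Hom C A S \<and> i2 \<in> Hom C B S \<and> p1 \<in> Hom C S A \<and> p2 \<in> Hom C S B \<and>
     cmp C i1 p1 = idt C A \<and> cmp C i2 p2 = idt C B \<and>
     cmp C i1 p2 = zro C A B \<and> cmp C i2 p1 = zro C B A \<and>
     pls C (cmp C p1 i1) (cmp C p2 i2) = idt C S"

definition additive_inv_category :: "('o, 'm, 'x) icat_scheme \<Rightarrow> bool" where
  "additive_inv_category C \<longleftrightarrow>
     \<comment> \<open>category\<close>
     (\<forall>f\<in>Mor C. Dom C f \<in> Ob C \<and> Cod C f \<in> Ob C) \<and>
     (\<forall>X\<in>Ob C. idt C X \<in> Hom C X X) \<and>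
     (\<forall>X\<in>Ob C. \<forall>Y\<in>Ob C. \<forall>Z\<in>Ob C. \<forall>f\<in>Hom C X Y. \<forall>g\<in>Hom C Y Z. cmp C f g \<in> Hom C X Z) \<and>
     (\<forall>f\<in>Mor C. \<forall>g\<in>Mor C. \<forall>h\<in>Mor C. Cod C f = Dom C g \<longrightarrow> Cod C g = Dom C h \<longrightarrow>
         cmp C (cmp C f g) h = cmp C f (cmp C g h)) \<and>
     (\<forall>f\<in>Mor C. cmp C (idt C (Dom C f)) f = f \<and> cmp C f (idt C (Cod C f)) = f) \<and>
     \<comment> \<open>hom-sets are abelian groups\<close>
     (\<forall>X\<in>Ob C. \<forall>Y\<in>Ob C. zro C X Y \<in> Hom C X Y \<and>
        (\<forall>f\<in>Hom C X Y. \<forall>g\<in>Hom C X Y. pls C f g \<in> Hom C X Y) \<and>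
        (\<forall>f\<in>Hom C X Y. ngt C f \<in> Hom C X Y) \<and>
        (\<forall>f\<in>Hom C X Y. \<forall>g\<in>Hom C X Y. \<forall>h\<in>Hom C X Y. pls C (pls C f g) h = pls C f (pls C g h)) \<and>
        (\<forall>f\<in>Hom C X Y. \<forall>g\<in>Hom C X Y. pls C f g = pls C g f) \<and>
        (\<forall>f\<in>Hom C X Y. pls C f (zro C X Y) = f) \<and>
        (\<forall>f\<in>Hom C X Y. pls C f (ngt C f) = zro C X Y)) \<and>
     \<comment> \<open>composition is bilinear\<close>
     (\<forall>X\<in>Ob C. \<forall>Y\<in>Ob C. \<forall>Z\<in>Ob C. \<forall>f\<in>Hom C X Y. \<forall>f'\<in>Hom C X Y. \<forall>g\<in>Hom C Y Z. \<forall>g'\<in>Hom C Y Z.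
        cmp C (pls C f f') g = pls C (cmp C f g) (cmp C f' g) \<and>
        cmp C f (pls C g g') = pls C (cmp C f g) (cmp C f g')) \<and>
     \<comment> \<open>zero object and binary biproducts\<close>
     (\<exists>Z. is_zero_object C Z) \<and>
     (\<forall>A\<in>Ob C. \<forall>B\<in>Ob C. \<exists>S i1 i2 p1 p2. is_biproduct C A B S i1 i2 p1 p2) \<and>
     \<comment> \<open>involution\<close>
     (\<forall>X\<in>Ob C. \<forall>Y\<in>Ob C. \<forall>f\<in>Hom C X Y. str C f \<in> Hom C Y X) \<and>
     (\<forall>f\<in>Mor C. str C (str C f) = f) \<and>
     (\<forall>f\<in>Mor C. \<forall>g\<in>Mor C. Cod C f = Dom C g \<longrightarrow> str C (cmp C f g) = cmp C (str C g) (str C f)) \<and>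
     (\<forall>X\<in>Ob C. \<forall>Y\<in>Ob C. \<forall>f\<in>Hom C X Y. \<forall>g\<in>Hom C X Y. str C (pls C f g) = pls C (str C f) (str C g))"

definition is_kernel :: "('o, 'm, 'x) icat_scheme \<Rightarrow> 'm \<Rightarrow> 'm \<Rightarrow> bool" where
  "is_kernel C \<phi> \<kappa> \<longleftrightarrow> \<kappa> \<in> Mor C \<and> Cod C \<kappa> = Dom C \<phi> \<and>
     cmp C \<kappa> \<phi> = zro C (Dom C \<kappa>) (Cod C \<phi>) \<and>
     (\<forall>\<alpha>\<in>Mor C. Cod C \<alpha> = Dom C \<phi> \<longrightarrow> cmp C \<alpha> \<phi> = zro C (Dom C \<alpha>) (Cod C \<phi>) \<longrightarrow>
        (\<exists>!\<alpha>'. \<alpha>' \<in> Hom C (Dom C \<alpha>) (Dom C \<kappa>) \<and> \<alpha> = cmp C \<alpha>' \<kappa>))"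

definition is_cokernel :: "('o, 'm, 'x) icat_scheme \<Rightarrow> 'm \<Rightarrow> 'm \<Rightarrow> bool" where
  "is_cokernel C \<phi> \<mu> \<longleftrightarrow> \<mu> \<in> Mor C \<and> Dom C \<mu> = Cod C \<phi> \<and>
     cmp C \<phi> \<mu> = zro C (Dom C \<phi>) (Cod C \<mu>) \<and>
     (\<forall>\<beta>\<in>Mor C. Dom C \<beta> = Cod C \<phi> \<longrightarrow> cmp C \<phi> \<beta> = zro C (Dom C \<phi>) (Cod C \<beta>) \<longrightarrow>
        (\<exists>!\<beta>'. \<beta>' \<in> Hom C (Cod C \<mu>) (Cod C \<beta>) \<and> \<beta> = cmp C \<mu> \<beta>'))"

definition regular :: "('o, 'm, 'x) icat_scheme \<Rightarrow> 'm \<Rightarrow> bool" where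
  "regular C \<phi> \<longleftrightarrow> (\<exists>\<chi>\<in>Hom C (Cod C \<phi>) (Dom C \<phi>). cmp C (cmp C \<phi> \<chi>) \<phi> = \<phi>)"

definition is_inverse :: "('o, 'm, 'x) icat_scheme \<Rightarrow> 'm \<Rightarrow> 'm \<Rightarrow> bool" where
  "is_inverse C \<phi> \<chi> \<longleftrightarrow> \<chi> \<in> Hom C (Cod C \<phi>) (Dom C \<phi>) \<and>
     cmp C \<phi> \<chi> = idt C (Dom C \<phi>) \<and> cmp C \<chi> \<phi> = idt C (Cod C \<phi>)"

definition invertible :: "('o, 'm, 'x) icat_scheme \<Rightarrow> 'm \<Rightarrow> bool" where
  "invertible C \<phi> \<longleftrightarrow> (\<exists>\<chi>. is_inverse C \<phi> \<chi>)"

definition inverse :: "('o, 'm, 'x) icat_scheme \<Rightarrow> 'm \<Rightarrow> 'm" where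
  "inverse C \<phi> = (THE \<chi>. is_inverse C \<phi> \<chi>)"

definition is_MP_inverse :: "('o, 'm, 'x) icat_scheme \<Rightarrow> 'm \<Rightarrow> 'm \<Rightarrow> bool" where
  "is_MP_inverse C \<phi> \<chi> \<longleftrightarrow> \<chi> \<in> Hom C (Dom C \<phi>) (Dom C \<phi>) \<and>
     cmp C (cmp C \<phi> \<chi>) \<phi> = \<phi> \<and> cmp C (cmp C \<chi> \<phi>) \<chi> = \<chi> \<and>
     str C (cmp C \<phi> \<chi>) = cmp C \<phi> \<chi> \<and> str C (cmp C \<chi> \<phi>) = cmp C \<chi> \<phi>"

definition is_group_inverse :: "('o, 'm, 'x) icat_scheme \<Rightarrow> 'm \<Rightarrow> 'm \<Rightarrow> bool" where
  "is_group_inverse C \<phi> \<chi> \<longleftrightarrow> \<chi> \<in> Hom C (Dom C \<phi>) (Dom C \<phi>) \<and>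
     cmp C (cmp C \<phi> \<chi>) \<phi> = \<phi> \<and> cmp C (cmp C \<chi> \<phi>) \<chi> = \<chi> \<and>
     cmp C \<phi> \<chi> = cmp C \<chi> \<phi>"

definition is_core_inverse :: "('o, 'm, 'x) icat_scheme \<Rightarrow> 'm \<Rightarrow> 'm \<Rightarrow> bool" where
  "is_core_inverse C \<phi> \<chi> \<longleftrightarrow> \<chi> \<in> Hom C (Dom C \<phi>) (Dom C \<phi>) \<and>
     str C (cmp C \<phi> \<chi>) = cmp C \<phi> \<chi> \<and>
     cmp C \<phi> (cmp C \<chi> \<chi>) = \<chi> \<and> cmp C \<chi> (cmp C \<phi> \<phi>) = \<phi>"

definition is_dual_core_inverse :: "('o, 'm, 'x) icat_scheme \<Rightarrow> 'm \<Rightarrow> 'm \<Rightarrow> bool" where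
  "is_dual_core_inverse C \<phi> \<chi> \<longleftrightarrow> \<chi> \<in> Hom C (Dom C \<phi>) (Dom C \<phi>) \<and>
     str C (cmp C \<chi> \<phi>) = cmp C \<chi> \<phi> \<and>
     cmp C (cmp C \<chi> \<chi>) \<phi> = \<chi> \<and> cmp C (cmp C \<phi> \<phi>) \<chi> = \<phi>"

definition MP_invertible where "MP_invertible C \<phi> \<longleftrightarrow> (\<exists>\<chi>. is_MP_inverse C \<phi> \<chi>)"
definition group_invertible where "group_invertible C \<phi> \<longleftrightarrow> (\<exists>\<chi>. is_group_inverse C \<phi> \<chi>)"
definition core_invertible where "core_invertible C \<phi> \<longleftrightarrow> (\<exists>\<chi>. is_core_inverse C \<phi> \<chi>)"
definition dual_core_invertible where "dual_core_invertible C \<phi> \<longleftrightarrow> (\<exists>\<chi>. is_dual_core_inverse C \<phi> \<chi>)"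

definition MP_inv where "MP_inv C \<phi> = (THE \<chi>. is_MP_inverse C \<phi> \<chi>)"
definition group_inv where "group_inv C \<phi> = (THE \<chi>. is_group_inverse C \<phi> \<chi>)"
definition core_inv where "core_inv C \<phi> = (THE \<chi>. is_core_inverse C \<phi> \<chi>)"
definition dual_core_inv where "dual_core_inv C \<phi> = (THE \<chi>. is_dual_core_inverse C \<phi> \<chi>)"

end

theory Submission
  imports Defs
begin

locale aic =
  fixes C :: "('o, 'm, 'x) icat_scheme" (structure)
  assumes ax: "additive_inv_category C"
begin

abbreviation c (infixr "\<cdot>" 70) where "f \<cdot> g \<equiv> cmp C f g"

lemma ax_assoc: "\<forall>f\<in>Mor C. \<forall>g\<in>Mor C. \<forall>h\<in>Mor C. Cod C f = Dom C g \<longrightarrow> Cod C g = Dom C h \<longrightarrow>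
         cmp C (cmp C f g) h = cmp C f (cmp C g h)"
  using ax unfolding additive_inv_category_def by (elim conjE) assumption
lemma ax_str: "\<forall>X\<in>Ob C. \<forall>Y\<in>Ob C. \<forall>f\<in>Hom C X Y. str C f \<in> Hom C Y X"
  using ax unfolding additive_inv_category_def by (elim conjE) assumption
lemma ax_str_pls: "\<forall>X\<in>Ob C. \<forall>Y\<in>Ob C. \<forall>f\<in>Hom C X Y. \<forall>g\<in>Hom C X Y. str C (pls C f g) = pls C (str C f) (str C g)"
  using ax unfolding additive_inv_category_def by (elim conjE) assumption

lemma mor_ob: "f \<in> Mor C \<Longrightarrow> Dom C f \<in> Ob C" "f \<in> Mor C \<Longrightarrow> Cod C f \<in> Ob C"
  using ax unfolding additive_inv_category_def by auto

lemma cmp_ok: assumes "f \<in> Mor C" "g \<in> Mor C" "Cod C f = Dom C g"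
  shows "f \<cdot> g \<in> Mor C \<and> Dom C (f \<cdot> g) = Dom C f \<and> Cod C (f \<cdot> g) = Cod C g"
proof -
  have "f \<in> Hom C (Dom C f) (Cod C f)" "g \<in> Hom C (Cod C f) (Cod C g)" using assms by (auto simp: Hom_def)
  moreover have "Dom C f \<in> Ob C" "Cod C f \<in> Ob C" "Cod C g \<in> Ob C" using assms mor_ob by auto
  moreover have "\<forall>X\<in>Ob C. \<forall>Y\<in>Ob C. \<forall>Z\<in>Ob C. \<forall>f\<in>Hom C X Y. \<forall>g\<in>Hom C Y Z. cmp C f g \<in> Hom C X Z"
    using ax unfolding additive_inv_category_def by (elim conjE) assumption
  ultimately have "f \<cdot> g \<in> Hom C (Dom C f) (Cod C g)" by blast
  thus ?thesis by (auto simp: Hom_def)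
qed

lemma cmp_mor[simp]: "f \<in> Mor C \<Longrightarrow> g \<in> Mor C \<Longrightarrow> Cod C f = Dom C g \<Longrightarrow> f \<cdot> g \<in> Mor C"
  and dom_cmp[simp]: "f \<in> Mor C \<Longrightarrow> g \<in> Mor C \<Longrightarrow> Cod C f = Dom C g \<Longrightarrow> Dom C (f \<cdot> g) = Dom C f"
  and cod_cmp[simp]: "f \<in> Mor C \<Longrightarrow> g \<in> Mor C \<Longrightarrow> Cod C f = Dom C g \<Longrightarrow> Cod C (f \<cdot> g) = Cod C g"
  using cmp_ok by auto

lemma idt_mor[simp]: "A \<in> Ob C \<Longrightarrow> idt C A \<in> Mor C"
  and dom_idt[simp]: "A \<in> Ob C \<Longrightarrow> Dom C (idt C A) = A"
  and cod_idt[simp]: "A \<in> Ob C \<Longrightarrow> Cod C (idt C A) = A"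
  using ax unfolding additive_inv_category_def Hom_def by auto

lemma assoc[simp]: "f \<in> Mor C \<Longrightarrow> g \<in> Mor C \<Longrightarrow> h \<in> Mor C \<Longrightarrow> Cod C f = Dom C g \<Longrightarrow> Cod C g = Dom C h
  \<Longrightarrow> (f \<cdot> g) \<cdot> h = f \<cdot> (g \<cdot> h)"
  using ax_assoc by blast

lemma id_l[simp]: "f \<in> Mor C \<Longrightarrow> Dom C f = A \<Longrightarrow> idt C A \<cdot> f = f"
  and id_r[simp]: "f \<in> Mor C \<Longrightarrow> Cod C f = A \<Longrightarrow> f \<cdot> idt C A = f"
  using ax unfolding additive_inv_category_def by auto

lemma ext: "u \<cdot> v = w \<Longrightarrow> u \<in> Mor C \<Longrightarrow> v \<in> Mor C \<Longrightarrow> h \<in> Mor C \<Longrightarrow> Cod C u = Dom C v \<Longrightarrow> Cod C v = Dom C h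
   \<Longrightarrow> u \<cdot> (v \<cdot> h) = w \<cdot> h"
  by (metis assoc)

definition "hom f A B \<longleftrightarrow> f \<in> Mor C \<and> Dom C f = A \<and> Cod C f = B"

lemma Hom_iff: "f \<in> Hom C A B \<longleftrightarrow> f \<in> Mor C \<and> Dom C f = A \<and> Cod C f = B" by (simp add: Hom_def)

lemma grp: assumes "A \<in> Ob C" "B \<in> Ob C"
  shows "zro C A B \<in> Hom C A B \<and>
        (\<forall>f\<in>Hom C A B. \<forall>g\<in>Hom C A B. pls C f g \<in> Hom C A B) \<and>
        (\<forall>f\<in>Hom C A B. ngt C f \<in> Hom C A B) \<and>
        (\<forall>f\<in>Hom C A B. \<forall>g\<in>Hom C A B. \<forall>h\<in>Hom C A B. pls C (pls C f g) h = pls C f (pls C g h)) \<and>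
        (\<forall>f\<in>Hom C A B. \<forall>g\<in>Hom C A B. pls C f g = pls C g f) \<and>
        (\<forall>f\<in>Hom C A B. pls C f (zro C A B) = f) \<and>
        (\<forall>f\<in>Hom C A B. pls C f (ngt C f) = zro C A B)"
proof -
  have "\<forall>X\<in>Ob C. \<forall>Y\<in>Ob C. zro C X Y \<in> Hom C X Y \<and>
        (\<forall>f\<in>Hom C X Y. \<forall>g\<in>Hom C X Y. pls C f g \<in> Hom C X Y) \<and>
        (\<forall>f\<in>Hom C X Y. ngt C f \<in> Hom C X Y) \<and>
        (\<forall>f\<in>Hom C X Y. \<forall>g\<in>Hom C X Y. \<forall>h\<in>Hom C X Y. pls C (pls C f g) h = pls C f (pls C g h)) \<and>
        (\<forall>f\<in>Hom C X Y. \<forall>g\<in>Hom C X Y. pls C f g = pls C g f) \<and>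
        (\<forall>f\<in>Hom C X Y. pls C f (zro C X Y) = f) \<and>
        (\<forall>f\<in>Hom C X Y. pls C f (ngt C f) = zro C X Y)"
    using ax unfolding additive_inv_category_def by (elim conjE) assumption
  thus ?thesis using assms by blast
qed

lemma zro_mor[simp]: "A \<in> Ob C \<Longrightarrow> B \<in> Ob C \<Longrightarrow> zro C A B \<in> Mor C"
  and dom_zro[simp]: "A \<in> Ob C \<Longrightarrow> B \<in> Ob C \<Longrightarrow> Dom C (zro C A B) = A"
  and cod_zro[simp]: "A \<in> Ob C \<Longrightarrow> B \<in> Ob C \<Longrightarrow> Cod C (zro C A B) = B"
  using grp by (auto simp: Hom_iff)

lemma pls_ok: "f \<in> Mor C \<Longrightarrow> g \<in> Mor C \<Longrightarrow> Dom C g = Dom C f \<Longrightarrow> Cod C g = Cod C f \<Longrightarrow>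
   pls C f g \<in> Mor C \<and> Dom C (pls C f g) = Dom C f \<and> Cod C (pls C f g) = Cod C f"
  using grp[of "Dom C f" "Cod C f"] mor_ob by (auto simp: Hom_iff)

lemma pls_mor[simp]: "f \<in> Mor C \<Longrightarrow> g \<in> Mor C \<Longrightarrow> Dom C g = Dom C f \<Longrightarrow> Cod C g = Cod C f \<Longrightarrow> pls C f g \<in> Mor C"
  and dom_pls[simp]: "f \<in> Mor C \<Longrightarrow> g \<in> Mor C \<Longrightarrow> Dom C g = Dom C f \<Longrightarrow> Cod C g = Cod C f \<Longrightarrow> Dom C (pls C f g) = Dom C f"
  and cod_pls[simp]: "f \<in> Mor C \<Longrightarrow> g \<in> Mor C \<Longrightarrow> Dom C g = Dom C f \<Longrightarrow> Cod C g = Cod C f \<Longrightarrow> Cod C (pls C f g) = Cod C f"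
  using pls_ok by auto

lemma ngt_ok: "f \<in> Mor C \<Longrightarrow> ngt C f \<in> Mor C \<and> Dom C (ngt C f) = Dom C f \<and> Cod C (ngt C f) = Cod C f"
  using grp[of "Dom C f" "Cod C f"] mor_ob by (auto simp: Hom_iff)

lemma ngt_mor[simp]: "f \<in> Mor C \<Longrightarrow> ngt C f \<in> Mor C"
  and dom_ngt[simp]: "f \<in> Mor C \<Longrightarrow> Dom C (ngt C f) = Dom C f"
  and cod_ngt[simp]: "f \<in> Mor C \<Longrightarrow> Cod C (ngt C f) = Cod C f"
  using ngt_ok by auto

lemma mns_mor[simp]: "f \<in> Mor C \<Longrightarrow> g \<in> Mor C \<Longrightarrow> Dom C g = Dom C f \<Longrightarrow> Cod C g = Cod C f \<Longrightarrow> mns C f g \<in> Mor C"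
  and dom_mns[simp]: "f \<in> Mor C \<Longrightarrow> g \<in> Mor C \<Longrightarrow> Dom C g = Dom C f \<Longrightarrow> Cod C g = Cod C f \<Longrightarrow> Dom C (mns C f g) = Dom C f"
  and cod_mns[simp]: "f \<in> Mor C \<Longrightarrow> g \<in> Mor C \<Longrightarrow> Dom C g = Dom C f \<Longrightarrow> Cod C g = Cod C f \<Longrightarrow> Cod C (mns C f g) = Cod C f"
  by (auto simp: mns_def)

lemma pls_assoc: "f \<in> Mor C \<Longrightarrow> g \<in> Mor C \<Longrightarrow> h \<in> Mor C \<Longrightarrow> Dom C g = Dom C f \<Longrightarrow> Cod C g = Cod C f
  \<Longrightarrow> Dom C h = Dom C f \<Longrightarrow> Cod C h = Cod C f \<Longrightarrow> pls C (pls C f g) h = pls C f (pls C g h)"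
  using grp[of "Dom C f" "Cod C f"] mor_ob by (auto simp: Hom_iff)

lemma pls_comm: "f \<in> Mor C \<Longrightarrow> g \<in> Mor C \<Longrightarrow> Dom C g = Dom C f \<Longrightarrow> Cod C g = Cod C f
  \<Longrightarrow> pls C f g = pls C g f"
  using grp[of "Dom C f" "Cod C f"] mor_ob by (auto simp: Hom_iff)

lemma pls_zro[simp]: "f \<in> Mor C \<Longrightarrow> Dom C f = A \<Longrightarrow> Cod C f = B \<Longrightarrow> pls C f (zro C A B) = f"
  using grp[of "Dom C f" "Cod C f"] mor_ob by (auto simp: Hom_iff)

lemma zro_pls[simp]: "f \<in> Mor C \<Longrightarrow> Dom C f = A \<Longrightarrow> Cod C f = B \<Longrightarrow> pls C (zro C A B) f = f"
  using pls_comm[of f "zro C A B"] mor_ob by auto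

lemma pls_ngt[simp]: "f \<in> Mor C \<Longrightarrow> pls C f (ngt C f) = zro C (Dom C f) (Cod C f)"
  using grp[of "Dom C f" "Cod C f"] mor_ob by (auto simp: Hom_iff)

lemma mns_self[simp]: "f \<in> Mor C \<Longrightarrow> mns C f f = zro C (Dom C f) (Cod C f)"
  by (simp add: mns_def)

lemma neg_unique: assumes "u \<in> Mor C" "v \<in> Mor C" "Dom C v = Dom C u" "Cod C v = Cod C u"
   "pls C u v = zro C (Dom C u) (Cod C u)" shows "v = ngt C u"
proof -
  have "v = pls C v (pls C u (ngt C u))" using assms by simp
  also have "\<dots> = pls C (pls C v u) (ngt C u)" using assms by (simp add: pls_assoc)
  also have "\<dots> = pls C (pls C u v) (ngt C u)" using assms pls_comm[of u v] by simp
  also have "\<dots> = ngt C u" using assms mor_ob by simp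
  finally show ?thesis .
qed

lemma self_double_zero: assumes "z \<in> Mor C" "z = pls C z z" shows "z = zro C (Dom C z) (Cod C z)"
proof -
  have "zro C (Dom C z) (Cod C z) = pls C z (ngt C z)" using assms(1) by simp
  also have "\<dots> = pls C (pls C z z) (ngt C z)" by (rule arg_cong[where f="\<lambda>u. pls C u (ngt C z)"]) (rule assms(2))
  also have "\<dots> = pls C z (pls C z (ngt C z))" using assms(1) by (simp add: pls_assoc del: pls_ngt)
  also have "\<dots> = z" using assms(1) mor_ob by simp
  finally show ?thesis by simp
qed

lemma distr: assumes "A \<in> Ob C" "B \<in> Ob C" "D \<in> Ob C" "f \<in> Hom C A B" "f' \<in> Hom C A B" "g \<in> Hom C B D" "g' \<in> Hom C B D"
  shows "cmp C (pls C f f') g = pls C (cmp C f g) (cmp C f' g) \<and> cmp C f (pls C g g') = pls C (cmp C f g) (cmp C f g')"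
proof -
  have "\<forall>X\<in>Ob C. \<forall>Y\<in>Ob C. \<forall>Z\<in>Ob C. \<forall>f\<in>Hom C X Y. \<forall>f'\<in>Hom C X Y. \<forall>g\<in>Hom C Y Z. \<forall>g'\<in>Hom C Y Z.
        cmp C (pls C f f') g = pls C (cmp C f g) (cmp C f' g) \<and>
        cmp C f (pls C g g') = pls C (cmp C f g) (cmp C f g')"
    using ax unfolding additive_inv_category_def by (elim conjE) assumption
  thus ?thesis using assms by blast
qed

lemma distr_l: "f \<in> Mor C \<Longrightarrow> g \<in> Mor C \<Longrightarrow> g' \<in> Mor C \<Longrightarrow> Cod C f = Dom C g \<Longrightarrow> Dom C g' = Dom C g \<Longrightarrow> Cod C g' = Cod C g
  \<Longrightarrow> f \<cdot> pls C g g' = pls C (f \<cdot> g) (f \<cdot> g')"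
  using distr[of "Dom C f" "Cod C f" "Cod C g" f f g g'] mor_ob by (auto simp: Hom_iff)

lemma distr_r: "f \<in> Mor C \<Longrightarrow> f' \<in> Mor C \<Longrightarrow> g \<in> Mor C \<Longrightarrow> Cod C f = Dom C g \<Longrightarrow> Dom C f' = Dom C f \<Longrightarrow> Cod C f' = Cod C f
  \<Longrightarrow> pls C f f' \<cdot> g = pls C (f \<cdot> g) (f' \<cdot> g)"
  using distr[of "Dom C f" "Cod C f" "Cod C g" f f' g g] mor_ob by (auto simp: Hom_iff)

lemma cmp_zro[simp]: assumes "f \<in> Mor C" "Cod C f = B" "D \<in> Ob C" shows "f \<cdot> zro C B D = zro C (Dom C f) D"
proof -
  have B: "B \<in> Ob C" using assms mor_ob by auto
  let ?z = "f \<cdot> zro C B D"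
  have "?z = f \<cdot> pls C (zro C B D) (zro C B D)" using assms B by simp
  also have "\<dots> = pls C ?z ?z" by (rule distr_l) (use assms B in simp_all)
  finally have "?z = pls C ?z ?z" .
  from self_double_zero[OF _ this] show ?thesis using assms B by simp
qed

lemma zro_cmp[simp]: assumes "f \<in> Mor C" "Dom C f = B" "A \<in> Ob C" shows "zro C A B \<cdot> f = zro C A (Cod C f)"
proof -
  have B: "B \<in> Ob C" using assms mor_ob by auto
  let ?z = "zro C A B \<cdot> f"
  have "?z = pls C (zro C A B) (zro C A B) \<cdot> f" using assms B by simp
  also have "\<dots> = pls C ?z ?z" by (rule distr_r) (use assms B in simp_all)
  finally have "?z = pls C ?z ?z" .
  from self_double_zero[OF _ this] show ?thesis using assms B by simp
qed

lemma cmp_ngt: assumes "f \<in> Mor C" "g \<in> Mor C" "Cod C f = Dom C g" shows "f \<cdot> ngt C g = ngt C (f \<cdot> g)"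
proof -
  have "pls C (f \<cdot> g) (f \<cdot> ngt C g) = f \<cdot> pls C g (ngt C g)" by (rule distr_l[symmetric]) (use assms in simp_all)
  also have "\<dots> = zro C (Dom C f) (Cod C g)" using assms mor_ob by simp
  finally show ?thesis using neg_unique[of "f \<cdot> g" "f \<cdot> ngt C g"] assms by simp
qed

lemma ngt_cmp: assumes "f \<in> Mor C" "g \<in> Mor C" "Cod C f = Dom C g" shows "ngt C f \<cdot> g = ngt C (f \<cdot> g)"
proof -
  have "pls C (f \<cdot> g) (ngt C f \<cdot> g) = pls C f (ngt C f) \<cdot> g" by (rule distr_r[symmetric]) (use assms in simp_all)
  also have "\<dots> = zro C (Dom C f) (Cod C g)" using assms mor_ob by simp
  finally show ?thesis using neg_unique[of "f \<cdot> g" "ngt C f \<cdot> g"] assms by simp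
qed

lemma cmp_mns: "f \<in> Mor C \<Longrightarrow> g \<in> Mor C \<Longrightarrow> g' \<in> Mor C \<Longrightarrow> Cod C f = Dom C g \<Longrightarrow> Dom C g' = Dom C g \<Longrightarrow> Cod C g' = Cod C g
  \<Longrightarrow> f \<cdot> mns C g g' = mns C (f \<cdot> g) (f \<cdot> g')"
  by (simp add: mns_def distr_l cmp_ngt)

lemma mns_cmp: "f \<in> Mor C \<Longrightarrow> f' \<in> Mor C \<Longrightarrow> g \<in> Mor C \<Longrightarrow> Cod C f = Dom C g \<Longrightarrow> Dom C f' = Dom C f \<Longrightarrow> Cod C f' = Cod C f
  \<Longrightarrow> mns C f f' \<cdot> g = mns C (f \<cdot> g) (f' \<cdot> g)"
  by (simp add: mns_def distr_r ngt_cmp)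

lemma ngt_zro: assumes "A \<in> Ob C" "B \<in> Ob C" shows "ngt C (zro C A B) = zro C A B"
  using neg_unique[of "zro C A B" "zro C A B"] assms by simp

lemma mns_zro[simp]: "f \<in> Mor C \<Longrightarrow> Dom C f = A \<Longrightarrow> Cod C f = B \<Longrightarrow> mns C f (zro C A B) = f"
proof -
  assume a: "f \<in> Mor C" "Dom C f = A" "Cod C f = B"
  hence "A \<in> Ob C" "B \<in> Ob C" using mor_ob by auto
  thus ?thesis using a by (simp add: mns_def ngt_zro)
qed

lemma mns_eq0: assumes "x \<in> Mor C" "y \<in> Mor C" "Dom C y = Dom C x" "Cod C y = Cod C x"
  "mns C x y = zro C (Dom C x) (Cod C x)" shows "x = y"
proof -
  have "y = ngt C (ngt C y)"
    using neg_unique[of "ngt C y" y] assms pls_comm[of y "ngt C y"] by simp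
  moreover have "ngt C y = ngt C x" using neg_unique[of x "ngt C y"] assms by (simp add: mns_def)
  moreover have "x = ngt C (ngt C x)"
    using neg_unique[of "ngt C x" x] assms pls_comm[of x "ngt C x"] by simp
  ultimately show ?thesis by simp
qed

lemma str_ok: "f \<in> Mor C \<Longrightarrow> str C f \<in> Mor C \<and> Dom C (str C f) = Cod C f \<and> Cod C (str C f) = Dom C f"
  using ax_str mor_ob unfolding Hom_def by auto

lemma str_mor[simp]: "f \<in> Mor C \<Longrightarrow> str C f \<in> Mor C"
  and dom_str[simp]: "f \<in> Mor C \<Longrightarrow> Dom C (str C f) = Cod C f"
  and cod_str[simp]: "f \<in> Mor C \<Longrightarrow> Cod C (str C f) = Dom C f"
  using str_ok by auto

lemma str_str[simp]: "f \<in> Mor C \<Longrightarrow> str C (str C f) = f"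
  using ax unfolding additive_inv_category_def by auto

lemma str_cmp[simp]: "f \<in> Mor C \<Longrightarrow> g \<in> Mor C \<Longrightarrow> Cod C f = Dom C g \<Longrightarrow> str C (f \<cdot> g) = str C g \<cdot> str C f"
  using ax unfolding additive_inv_category_def by auto

lemma str_pls[simp]: "f \<in> Mor C \<Longrightarrow> g \<in> Mor C \<Longrightarrow> Dom C g = Dom C f \<Longrightarrow> Cod C g = Cod C f \<Longrightarrow> str C (pls C f g) = pls C (str C f) (str C g)"
  using ax_str_pls[rule_format, of "Dom C f" "Cod C f" f g] mor_ob unfolding Hom_def by auto

lemma str_zro[simp]: assumes "A \<in> Ob C" "B \<in> Ob C" shows "str C (zro C A B) = zro C B A"
proof -
  have "str C (zro C A B) = str C (pls C (zro C A B) (zro C A B))" using assms by simp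
  also have "\<dots> = pls C (str C (zro C A B)) (str C (zro C A B))" by (rule str_pls) (use assms in simp_all)
  finally show ?thesis using self_double_zero[of "str C (zro C A B)"] assms by simp
qed

lemma str_ngt[simp]: assumes "f \<in> Mor C" shows "str C (ngt C f) = ngt C (str C f)"
proof -
  have "pls C (str C f) (str C (ngt C f)) = str C (pls C f (ngt C f))" by (rule str_pls[symmetric]) (use assms in simp_all)
  also have "\<dots> = zro C (Cod C f) (Dom C f)" using assms mor_ob by simp
  finally show ?thesis using neg_unique[of "str C f" "str C (ngt C f)"] assms by simp
qed

lemma str_mns[simp]: "f \<in> Mor C \<Longrightarrow> g \<in> Mor C \<Longrightarrow> Dom C g = Dom C f \<Longrightarrow> Cod C g = Cod C f \<Longrightarrow> str C (mns C f g) = mns C (str C f) (str C g)"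
  by (simp add: mns_def)

lemma str_idt[simp]: assumes "A \<in> Ob C" shows "str C (idt C A) = idt C A"
proof -
  let ?i = "idt C A"
  have 1: "str C (str C ?i \<cdot> ?i) = str C ?i \<cdot> str C (str C ?i)" by (rule str_cmp) (use assms in simp_all)
  have 2: "str C ?i \<cdot> ?i = str C ?i" using assms by simp
  have 3: "str C (str C ?i) = ?i" using assms by simp
  have 4: "str C ?i \<cdot> ?i = str C ?i" using assms by simp
  from 1 2 3 have "?i = str C ?i \<cdot> ?i" by metis
  with 4 show ?thesis by simp
qed

end

context aic begin

lemma inv_unique: assumes "is_inverse C f g" "is_inverse C f g'" "f \<in> Mor C" shows "g = g'"
proof -
  from assms have t: "g \<in> Mor C" "Dom C g = Cod C f" "Cod C g = Dom C f" "g' \<in> Mor C" "Dom C g' = Cod C f" "Cod C g' = Dom C f"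
    and e: "f \<cdot> g = idt C (Dom C f)" "g \<cdot> f = idt C (Cod C f)" "f \<cdot> g' = idt C (Dom C f)" "g' \<cdot> f = idt C (Cod C f)"
    by (auto simp: is_inverse_def Hom_iff)
  have "g = g \<cdot> (f \<cdot> g')" using t e assms(3) by simp
  also have "\<dots> = (g \<cdot> f) \<cdot> g'" using t assms(3) by simp
  also have "\<dots> = g'" using t e assms(3) mor_ob by simp
  finally show ?thesis .
qed

lemma inverse_is: assumes "invertible C f" "f \<in> Mor C" shows "is_inverse C f (inverse C f)"
proof -
  obtain g where "is_inverse C f g" using assms by (auto simp: invertible_def)
  hence "\<exists>!g. is_inverse C f g" using inv_unique assms by blast
  thus ?thesis unfolding inverse_def by (rule theI')
qed

lemma inv_sa: assumes "is_inverse C f g" "f \<in> Mor C" "str C f = f" shows "str C g = g"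
proof -
  from assms have t: "g \<in> Mor C" "Dom C g = Cod C f" "Cod C g = Dom C f"
    and e: "f \<cdot> g = idt C (Dom C f)" "g \<cdot> f = idt C (Cod C f)"
    by (auto simp: is_inverse_def Hom_iff)
  have dc: "Dom C f = Cod C f" using assms(3) dom_str[OF assms(2)] by simp
  have "f \<cdot> str C g = str C (g \<cdot> f)" using t assms by simp
  also have "\<dots> = idt C (Dom C f)" using e t assms mor_ob dc by simp
  finally have 1: "f \<cdot> str C g = idt C (Dom C f)" .
  have "str C g \<cdot> f = str C (f \<cdot> g)" using t assms by simp
  also have "\<dots> = idt C (Cod C f)" using e t assms mor_ob dc by simp
  finally have 2: "str C g \<cdot> f = idt C (Cod C f)" .
  have "is_inverse C f (str C g)" using 1 2 t assms dc by (auto simp: is_inverse_def Hom_iff)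
  thus ?thesis using inv_unique assms by blast
qed

lemma ext2: "u \<cdot> (v \<cdot> w) = r \<Longrightarrow> u \<in> Mor C \<Longrightarrow> v \<in> Mor C \<Longrightarrow> w \<in> Mor C \<Longrightarrow> h \<in> Mor C \<Longrightarrow> Cod C u = Dom C v \<Longrightarrow> Cod C v = Dom C w
   \<Longrightarrow> Cod C w = Dom C h \<Longrightarrow> u \<cdot> (v \<cdot> (w \<cdot> h)) = r \<cdot> h"
proof -
  assume r: "u \<cdot> (v \<cdot> w) = r" and ts: "u \<in> Mor C" "v \<in> Mor C" "w \<in> Mor C" "h \<in> Mor C" "Cod C u = Dom C v" "Cod C v = Dom C w" "Cod C w = Dom C h"
  have "u \<cdot> (v \<cdot> (w \<cdot> h)) = (u \<cdot> (v \<cdot> w)) \<cdot> h" using ts by simp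
  thus ?thesis using r by simp
qed

lemma MP_unique: assumes a: "a \<in> Mor C" "Dom C a = X" "Cod C a = X" and "is_MP_inverse C a x" "is_MP_inverse C a y"
  shows "x = y"
proof -
  from assms have t: "x \<in> Mor C" "Dom C x = X" "Cod C x = X" "y \<in> Mor C" "Dom C y = X" "Cod C y = X"
    by (auto simp: is_MP_inverse_def Hom_iff)
  from assms t have h: "a \<cdot> (x \<cdot> a) = a" "x \<cdot> (a \<cdot> x) = x" "str C x \<cdot> str C a = a \<cdot> x" "str C a \<cdot> str C x = x \<cdot> a"
     "a \<cdot> (y \<cdot> a) = a" "y \<cdot> (a \<cdot> y) = y" "str C y \<cdot> str C a = a \<cdot> y" "str C a \<cdot> str C y = y \<cdot> a"
    by (auto simp: is_MP_inverse_def)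
  have "str C a = str C (a \<cdot> (y \<cdot> a))" using h(5) by simp
  also have "\<dots> = str C a \<cdot> (str C y \<cdot> str C a)" using a t by simp
  finally have sa1: "str C a \<cdot> (str C y \<cdot> str C a) = str C a" by simp
  have "str C a = str C (a \<cdot> (x \<cdot> a))" using h(1) by simp
  also have "\<dots> = str C a \<cdot> (str C x \<cdot> str C a)" using a t by simp
  finally have sa2: "str C a \<cdot> (str C x \<cdot> str C a) = str C a" by simp
  note sa = sa1 sa2
  have "x = x \<cdot> (a \<cdot> x)" using h by simp
  also have "\<dots> = x \<cdot> (str C x \<cdot> str C a)" using h by simp
  also have "\<dots> = x \<cdot> (str C x \<cdot> (str C a \<cdot> (str C y \<cdot> str C a)))" using sa by simp
  also have "\<dots> = x \<cdot> ((str C x \<cdot> str C a) \<cdot> (str C y \<cdot> str C a))" using a t by simp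
  also have "\<dots> = x \<cdot> ((a \<cdot> x) \<cdot> (a \<cdot> y))" using h by simp
  also have "\<dots> = x \<cdot> (a \<cdot> y)" using a t ext2[OF h(1), of "y"] by simp
  finally have 1: "x = x \<cdot> (a \<cdot> y)" .
  have "y = (y \<cdot> a) \<cdot> y" using h a t by simp
  also have "\<dots> = (str C a \<cdot> str C y) \<cdot> y" using h by simp
  also have "\<dots> = ((str C a \<cdot> (str C x \<cdot> str C a)) \<cdot> str C y) \<cdot> y" using sa by simp
  also have "\<dots> = ((str C a \<cdot> str C x) \<cdot> (str C a \<cdot> str C y)) \<cdot> y" using a t by simp
  also have "\<dots> = ((x \<cdot> a) \<cdot> (y \<cdot> a)) \<cdot> y" using h by simp
  also have "\<dots> = x \<cdot> (a \<cdot> (y \<cdot> (a \<cdot> y)))" using a t by simp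
  also have "\<dots> = x \<cdot> (a \<cdot> y)" using h by simp
  finally show ?thesis using 1 by simp
qed

lemma group_unique: assumes a: "a \<in> Mor C" "Dom C a = X" "Cod C a = X" and "is_group_inverse C a x" "is_group_inverse C a y"
  shows "x = y"
proof -
  from assms have t: "x \<in> Mor C" "Dom C x = X" "Cod C x = X" "y \<in> Mor C" "Dom C y = X" "Cod C y = X"
    by (auto simp: is_group_inverse_def Hom_iff)
  from assms t have h: "a \<cdot> (x \<cdot> a) = a" "x \<cdot> (a \<cdot> x) = x" "a \<cdot> x = x \<cdot> a"
     "a \<cdot> (y \<cdot> a) = a" "y \<cdot> (a \<cdot> y) = y" "a \<cdot> y = y \<cdot> a"
    by (auto simp: is_group_inverse_def)
  have "a \<cdot> x = (a \<cdot> (y \<cdot> a)) \<cdot> x" using h by simp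
  also have "\<dots> = (a \<cdot> y) \<cdot> (a \<cdot> x)" using a t by simp
  also have "\<dots> = (y \<cdot> a) \<cdot> (x \<cdot> a)" using h by simp
  also have "\<dots> = y \<cdot> (a \<cdot> (x \<cdot> a))" using a t by simp
  also have "\<dots> = a \<cdot> y" using h by simp
  finally have e: "a \<cdot> x = a \<cdot> y" .
  have "x = x \<cdot> (a \<cdot> x)" using h by simp
  also have "\<dots> = x \<cdot> (a \<cdot> y)" using e by simp
  also have "\<dots> = (x \<cdot> a) \<cdot> y" using a t by simp
  also have "\<dots> = (a \<cdot> y) \<cdot> y" using h e by simp
  also have "\<dots> = (y \<cdot> a) \<cdot> y" using h by simp
  also have "\<dots> = y" using h a t by simp
  finally show ?thesis .
qed

lemma core_facts: assumes a: "a \<in> Mor C" "Dom C a = X" "Cod C a = X" and "is_core_inverse C a x"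
  shows "x \<in> Mor C" "Dom C x = X" "Cod C x = X" "a \<cdot> (x \<cdot> a) = a" "x \<cdot> (a \<cdot> x) = x"
    "is_group_inverse C a (x \<cdot> (x \<cdot> a))" "a \<cdot> (x \<cdot> (x \<cdot> a)) = x \<cdot> a" "str C (a \<cdot> x) = a \<cdot> x"
proof -
  from assms show t: "x \<in> Mor C" "Dom C x = X" "Cod C x = X"
    by (auto simp: is_core_inverse_def Hom_iff)
  from assms t show h3: "str C (a \<cdot> x) = a \<cdot> x" by (auto simp: is_core_inverse_def)
  from assms t have h: "a \<cdot> (x \<cdot> x) = x" "x \<cdot> (a \<cdot> a) = a"
    by (auto simp: is_core_inverse_def)
  note e1 = ext2[OF h(1)] ext2[OF h(2)]
  have "a = x \<cdot> (a \<cdot> a)" using h by simp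
  also have "\<dots> = (a \<cdot> (x \<cdot> x)) \<cdot> (a \<cdot> a)" using h by simp
  also have "\<dots> = a \<cdot> (x \<cdot> a)" using a t h(2) by simp
  finally show 1: "a \<cdot> (x \<cdot> a) = a" by simp
  have "x \<cdot> (a \<cdot> x) = x \<cdot> (a \<cdot> (a \<cdot> (x \<cdot> x)))" using h by simp
  also have "\<dots> = (x \<cdot> (a \<cdot> a)) \<cdot> (x \<cdot> x)" using a t by simp
  also have "\<dots> = x" using a t h by simp
  finally show 2: "x \<cdot> (a \<cdot> x) = x" .
  note e2 = ext2[OF 1] ext2[OF 2]
  show 3: "a \<cdot> (x \<cdot> (x \<cdot> a)) = x \<cdot> a" using a t e1 by simp
  have 4: "x \<cdot> (x \<cdot> (a \<cdot> a)) = x \<cdot> a" using a t h by simp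
  show "is_group_inverse C a (x \<cdot> (x \<cdot> a))" unfolding is_group_inverse_def Hom_iff
    using a t e1 e2 h 1 2 3 4 by simp
qed

lemma core_unique: assumes a: "a \<in> Mor C" "Dom C a = X" "Cod C a = X" and x: "is_core_inverse C a x" and y: "is_core_inverse C a y"
  shows "x = y"
proof -
  note fx = core_facts[OF a x] and fy = core_facts[OF a y]
  note t = fx(1-3) fy(1-3)
  note e = ext2[OF fx(4)] ext2[OF fx(5)] ext2[OF fy(4)] ext2[OF fy(5)]
  have 1: "a \<cdot> x = (a \<cdot> y) \<cdot> (a \<cdot> x)" using a t e fx(4,5) fy(4,5) by simp
  have 2: "str C ((a \<cdot> y) \<cdot> (a \<cdot> x)) = str C (a \<cdot> x) \<cdot> str C (a \<cdot> y)" by (rule str_cmp) (use a t in simp_all)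
  have 3: "(a \<cdot> x) \<cdot> (a \<cdot> y) = a \<cdot> y" using a t e fx(4,5) fy(4,5) by simp
  have p: "a \<cdot> x = a \<cdot> y" using 1 2 3 fx(8) fy(8) by metis
  have g: "x \<cdot> (x \<cdot> a) = y \<cdot> (y \<cdot> a)" using group_unique[OF a fx(6) fy(6)] .
  have q: "x \<cdot> a = y \<cdot> a" using fx(7) fy(7) g by metis
  have "x = (x \<cdot> a) \<cdot> x" using a t fx by simp
  also have "\<dots> = (y \<cdot> a) \<cdot> x" using q by simp
  also have "\<dots> = y \<cdot> (a \<cdot> x)" using a t by simp
  also have "\<dots> = y \<cdot> (a \<cdot> y)" using p by simp
  also have "\<dots> = y" using fy by simp
  finally show ?thesis .
qed

lemma dcore_facts: assumes a: "a \<in> Mor C" "Dom C a = X" "Cod C a = X" and "is_dual_core_inverse C a x"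
  shows "x \<in> Mor C" "Dom C x = X" "Cod C x = X" "a \<cdot> (x \<cdot> a) = a" "x \<cdot> (a \<cdot> x) = x"
    "is_group_inverse C a (a \<cdot> (x \<cdot> x))" "a \<cdot> (x \<cdot> (x \<cdot> a)) = a \<cdot> x" "str C (x \<cdot> a) = x \<cdot> a"
proof -
  from assms show t: "x \<in> Mor C" "Dom C x = X" "Cod C x = X"
    by (auto simp: is_dual_core_inverse_def Hom_iff)
  from assms t show h3: "str C (x \<cdot> a) = x \<cdot> a" by (auto simp: is_dual_core_inverse_def)
  from assms t have h: "x \<cdot> (x \<cdot> a) = x" "a \<cdot> (a \<cdot> x) = a"
    by (auto simp: is_dual_core_inverse_def)
  note e1 = ext2[OF h(1)] ext2[OF h(2)]
  have "a = a \<cdot> (a \<cdot> x)" using h by simp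
  also have "\<dots> = a \<cdot> (a \<cdot> (x \<cdot> (x \<cdot> a)))" using h by simp
  also have "\<dots> = a \<cdot> (x \<cdot> a)" using a t ext2[OF h(2)] by simp
  finally show 1: "a \<cdot> (x \<cdot> a) = a" by simp
  have "x \<cdot> (a \<cdot> x) = (x \<cdot> (x \<cdot> a)) \<cdot> (a \<cdot> x)" using h by simp
  also have "\<dots> = x \<cdot> (x \<cdot> (a \<cdot> (a \<cdot> x)))" using a t by simp
  also have "\<dots> = x" using a t h by simp
  finally show 2: "x \<cdot> (a \<cdot> x) = x" .
  note e2 = ext2[OF 1] ext2[OF 2]
  show 3: "a \<cdot> (x \<cdot> (x \<cdot> a)) = a \<cdot> x" using a t h by simp
  have 4: "a \<cdot> (a \<cdot> (x \<cdot> x)) = a \<cdot> x" using a t e1 by simp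
  show "is_group_inverse C a (a \<cdot> (x \<cdot> x))" unfolding is_group_inverse_def Hom_iff
    using a t e1 e2 h 1 2 3 4 by simp
qed

lemma dcore_unique: assumes a: "a \<in> Mor C" "Dom C a = X" "Cod C a = X" and x: "is_dual_core_inverse C a x" and y: "is_dual_core_inverse C a y"
  shows "x = y"
proof -
  note fx = dcore_facts[OF a x] and fy = dcore_facts[OF a y]
  note t = fx(1-3) fy(1-3)
  note e = ext2[OF fx(4)] ext2[OF fx(5)] ext2[OF fy(4)] ext2[OF fy(5)]
  have 1: "x \<cdot> a = (x \<cdot> a) \<cdot> (y \<cdot> a)" using a t e fx(4,5) fy(4,5) by simp
  have 2: "str C ((x \<cdot> a) \<cdot> (y \<cdot> a)) = str C (y \<cdot> a) \<cdot> str C (x \<cdot> a)" by (rule str_cmp) (use a t in simp_all)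
  have 3: "(y \<cdot> a) \<cdot> (x \<cdot> a) = y \<cdot> a" using a t e fx(4,5) fy(4,5) by simp
  have p: "x \<cdot> a = y \<cdot> a" using 1 2 3 fx(8) fy(8) by metis
  have g: "a \<cdot> (x \<cdot> x) = a \<cdot> (y \<cdot> y)" using group_unique[OF a fx(6) fy(6)] .
  have q: "a \<cdot> x = a \<cdot> y" using fx(7) fy(7) g a t by (metis assoc cmp_mor cod_cmp dom_cmp)
  have "x = x \<cdot> (a \<cdot> x)" using fx by simp
  also have "\<dots> = x \<cdot> (a \<cdot> y)" using q by simp
  also have "\<dots> = (x \<cdot> a) \<cdot> y" using a t by simp
  also have "\<dots> = (y \<cdot> a) \<cdot> y" using p by simp
  also have "\<dots> = y" using a t fy by simp
  finally show ?thesis .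
qed

end

context aic begin

lemma inv_gen: assumes t: "k \<in> Mor C" "a \<in> Mor C" "Dom C k = K" "Cod C k = X" "Dom C a = X" "Cod C a = K"
  and h: "k \<cdot> a = idt C K" "str C k \<cdot> str C a = a \<cdot> k"
  shows "is_inverse C (k \<cdot> str C k) (str C a \<cdot> a)"
proof -
  have K: "K \<in> Ob C" using t mor_ob by metis
  have s: "str C a \<cdot> str C k = idt C K"
  proof -
    have "str C a \<cdot> str C k = str C (k \<cdot> a)" using t by simp
    thus ?thesis using h K by simp
  qed
  have 1: "k \<cdot> (str C k \<cdot> (str C a \<cdot> a)) = idt C K"
  proof -
    have "k \<cdot> (str C k \<cdot> (str C a \<cdot> a)) = k \<cdot> ((str C k \<cdot> str C a) \<cdot> a)" using t by simp
    also have "\<dots> = k \<cdot> ((a \<cdot> k) \<cdot> a)" using h by simp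
    also have "\<dots> = (k \<cdot> a) \<cdot> (k \<cdot> a)" using t by simp
    finally show ?thesis using h K by simp
  qed
  have 2: "str C a \<cdot> (a \<cdot> (k \<cdot> str C k)) = idt C K"
  proof -
    have "str C a \<cdot> (a \<cdot> (k \<cdot> str C k)) = str C a \<cdot> ((a \<cdot> k) \<cdot> str C k)" using t by simp
    also have "\<dots> = str C a \<cdot> ((str C k \<cdot> str C a) \<cdot> str C k)" using h by simp
    also have "\<dots> = (str C a \<cdot> str C k) \<cdot> (str C a \<cdot> str C k)" using t by simp
    finally show ?thesis using s K by simp
  qed
  show ?thesis unfolding is_inverse_def Hom_iff using t 1 2 by simp
qed

lemma inv_gen2: assumes t: "k \<in> Mor C" "a \<in> Mor C" "Dom C k = K" "Cod C k = X" "Dom C a = X" "Cod C a = K"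
  "m \<in> Mor C" "b \<in> Mor C" "Dom C m = X" "Cod C m = L" "Dom C b = L" "Cod C b = X"
  and h: "k \<cdot> a = idt C K" "b \<cdot> m = idt C L" "a \<cdot> k = m \<cdot> b"
  shows "is_inverse C (k \<cdot> m) (b \<cdot> a)"
proof -
  have K: "K \<in> Ob C" "L \<in> Ob C" using t mor_ob by metis+
  have 1: "k \<cdot> (m \<cdot> (b \<cdot> a)) = idt C K"
  proof -
    have "k \<cdot> (m \<cdot> (b \<cdot> a)) = k \<cdot> ((m \<cdot> b) \<cdot> a)" using t by simp
    also have "\<dots> = k \<cdot> ((a \<cdot> k) \<cdot> a)" using h by simp
    also have "\<dots> = (k \<cdot> a) \<cdot> (k \<cdot> a)" using t by simp
    finally show ?thesis using h K by simp
  qed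
  have 2: "b \<cdot> (a \<cdot> (k \<cdot> m)) = idt C L"
  proof -
    have "b \<cdot> (a \<cdot> (k \<cdot> m)) = b \<cdot> ((a \<cdot> k) \<cdot> m)" using t by simp
    also have "\<dots> = b \<cdot> ((m \<cdot> b) \<cdot> m)" using h by simp
    also have "\<dots> = (b \<cdot> m) \<cdot> (b \<cdot> m)" using t by simp
    finally show ?thesis using h K by simp
  qed
  show ?thesis unfolding is_inverse_def Hom_iff using t 1 2 by simp
qed

end

locale ctx = aic +
  fixes X K L and \<phi> \<kappa> \<mu>
  assumes obs: "X \<in> Ob C" "K \<in> Ob C" "L \<in> Ob C"
    and phi: "\<phi> \<in> Hom C X X"
    and kap: "\<kappa> \<in> Hom C K X" "is_kernel C \<phi> \<kappa>"
    and lam: "\<mu> \<in> Hom C X L" "is_cokernel C \<phi> \<mu>"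
begin

lemma ty[simp]: "X \<in> Ob C" "K \<in> Ob C" "L \<in> Ob C" "\<phi> \<in> Mor C" "Dom C \<phi> = X" "Cod C \<phi> = X"
  "\<kappa> \<in> Mor C" "Dom C \<kappa> = K" "Cod C \<kappa> = X" "\<mu> \<in> Mor C" "Dom C \<mu> = X" "Cod C \<mu> = L"
  using obs phi kap lam by (auto simp: Hom_iff)

lemma kz[simp]: "\<kappa> \<cdot> \<phi> = zro C K X" and mz[simp]: "\<phi> \<cdot> \<mu> = zro C X L"
  using kap lam by (auto simp: is_kernel_def is_cokernel_def)

lemma kz'[simp]: "h \<in> Mor C \<Longrightarrow> Dom C h = X \<Longrightarrow> \<kappa> \<cdot> (\<phi> \<cdot> h) = zro C K (Cod C h)"
  and mz'[simp]: "h \<in> Mor C \<Longrightarrow> Dom C h = L \<Longrightarrow> \<phi> \<cdot> (\<mu> \<cdot> h) = zro C X (Cod C h)"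
  using ext[OF kz, of h] ext[OF mz, of h] by simp_all

lemma kfac: assumes "al \<in> Mor C" "Cod C al = X" "al \<cdot> \<phi> = zro C (Dom C al) X"
  shows "\<exists>a. a \<in> Mor C \<and> Dom C a = Dom C al \<and> Cod C a = K \<and> al = a \<cdot> \<kappa>"
proof -
  have univ: "\<forall>al\<in>Mor C. Cod C al = Dom C \<phi> \<longrightarrow> al \<cdot> \<phi> = zro C (Dom C al) (Cod C \<phi>) \<longrightarrow>
        (\<exists>!al'. al' \<in> Hom C (Dom C al) (Dom C \<kappa>) \<and> al = al' \<cdot> \<kappa>)" using kap(2) unfolding is_kernel_def by (elim conjE) assumption
  have "\<exists>!al'. al' \<in> Hom C (Dom C al) (Dom C \<kappa>) \<and> al = al' \<cdot> \<kappa>"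
    by (rule univ[rule_format]) (use assms in simp_all)
  then obtain a where "a \<in> Hom C (Dom C al) (Dom C \<kappa>) \<and> al = a \<cdot> \<kappa>" by (rule ex1E)
  thus ?thesis unfolding Hom_iff ty(8) by blast
qed

lemma kcancel: assumes "u \<in> Mor C" "v \<in> Mor C" "Cod C u = K" "Cod C v = K" "Dom C v = Dom C u" "u \<cdot> \<kappa> = v \<cdot> \<kappa>"
  shows "u = v"
proof -
  have "(u \<cdot> \<kappa>) \<cdot> \<phi> = zro C (Dom C (u \<cdot> \<kappa>)) (Cod C \<phi>)" using assms mor_ob by simp
  moreover have univ: "\<forall>al\<in>Mor C. Cod C al = Dom C \<phi> \<longrightarrow> al \<cdot> \<phi> = zro C (Dom C al) (Cod C \<phi>) \<longrightarrow>
        (\<exists>!al'. al' \<in> Hom C (Dom C al) (Dom C \<kappa>) \<and> al = al' \<cdot> \<kappa>)" using kap(2) unfolding is_kernel_def by (elim conjE) assumption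
  ultimately have ex: "\<exists>!al'. al' \<in> Hom C (Dom C (u \<cdot> \<kappa>)) (Dom C \<kappa>) \<and> u \<cdot> \<kappa> = al' \<cdot> \<kappa>"
    using assms(1-5) by (intro univ[rule_format]) simp_all
  have Pu: "u \<in> Hom C (Dom C (u \<cdot> \<kappa>)) (Dom C \<kappa>) \<and> u \<cdot> \<kappa> = u \<cdot> \<kappa>" using assms by (simp add: Hom_iff)
  have Pv: "v \<in> Hom C (Dom C (u \<cdot> \<kappa>)) (Dom C \<kappa>) \<and> u \<cdot> \<kappa> = v \<cdot> \<kappa>" using assms by (simp add: Hom_iff)
  from ex obtain w where "\<forall>y y'. (y \<in> Hom C (Dom C (u \<cdot> \<kappa>)) (Dom C \<kappa>) \<and> u \<cdot> \<kappa> = y \<cdot> \<kappa>) \<and> (y' \<in> Hom C (Dom C (u \<cdot> \<kappa>)) (Dom C \<kappa>) \<and> u \<cdot> \<kappa> = y' \<cdot> \<kappa>) \<longrightarrow> y = y'"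
    by (rule alt_ex1E)
  from this[rule_format, OF conjI[OF Pu Pv]] show ?thesis .
qed

lemma cfac: assumes "be \<in> Mor C" "Dom C be = X" "\<phi> \<cdot> be = zro C X (Cod C be)"
  shows "\<exists>b. b \<in> Mor C \<and> Dom C b = L \<and> Cod C b = Cod C be \<and> be = \<mu> \<cdot> b"
proof -
  have univ: "\<forall>be\<in>Mor C. Dom C be = Cod C \<phi> \<longrightarrow> \<phi> \<cdot> be = zro C (Dom C \<phi>) (Cod C be) \<longrightarrow>
        (\<exists>!be'. be' \<in> Hom C (Cod C \<mu>) (Cod C be) \<and> be = \<mu> \<cdot> be')" using lam(2) unfolding is_cokernel_def by (elim conjE) assumption
  have "\<exists>!be'. be' \<in> Hom C (Cod C \<mu>) (Cod C be) \<and> be = \<mu> \<cdot> be'"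
    by (rule univ[rule_format]) (use assms in simp_all)
  then obtain b where "b \<in> Hom C (Cod C \<mu>) (Cod C be) \<and> be = \<mu> \<cdot> b" by (rule ex1E)
  thus ?thesis unfolding Hom_iff ty(12) by blast
qed

lemma ccancel: assumes "u \<in> Mor C" "v \<in> Mor C" "Dom C u = L" "Dom C v = L" "Cod C v = Cod C u" "\<mu> \<cdot> u = \<mu> \<cdot> v"
  shows "u = v"
proof -
  have "\<phi> \<cdot> (\<mu> \<cdot> u) = zro C (Dom C \<phi>) (Cod C (\<mu> \<cdot> u))" using assms mor_ob by simp
  moreover have univ: "\<forall>be\<in>Mor C. Dom C be = Cod C \<phi> \<longrightarrow> \<phi> \<cdot> be = zro C (Dom C \<phi>) (Cod C be) \<longrightarrow>
        (\<exists>!be'. be' \<in> Hom C (Cod C \<mu>) (Cod C be) \<and> be = \<mu> \<cdot> be')" using lam(2) unfolding is_cokernel_def by (elim conjE) assumption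
  ultimately have ex: "\<exists>!be'. be' \<in> Hom C (Cod C \<mu>) (Cod C (\<mu> \<cdot> u)) \<and> \<mu> \<cdot> u = \<mu> \<cdot> be'"
    using assms(1-5) by (intro univ[rule_format]) simp_all
  have Pu: "u \<in> Hom C (Cod C \<mu>) (Cod C (\<mu> \<cdot> u)) \<and> \<mu> \<cdot> u = \<mu> \<cdot> u" using assms by (simp add: Hom_iff)
  have Pv: "v \<in> Hom C (Cod C \<mu>) (Cod C (\<mu> \<cdot> u)) \<and> \<mu> \<cdot> u = \<mu> \<cdot> v" using assms by (simp add: Hom_iff)
  from ex obtain w where "\<forall>y y'. (y \<in> Hom C (Cod C \<mu>) (Cod C (\<mu> \<cdot> u)) \<and> \<mu> \<cdot> u = \<mu> \<cdot> y) \<and> (y' \<in> Hom C (Cod C \<mu>) (Cod C (\<mu> \<cdot> u)) \<and> \<mu> \<cdot> u = \<mu> \<cdot> y') \<longrightarrow> y = y'"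
    by (rule alt_ex1E)
  from this[rule_format, OF conjI[OF Pu Pv]] show ?thesis .
qed

lemma left_a: assumes y: "y \<in> Mor C" "Dom C y = X" "Cod C y = X" "\<phi> \<cdot> (y \<cdot> \<phi>) = \<phi>"
  shows "\<exists>a. a \<in> Mor C \<and> Dom C a = X \<and> Cod C a = K \<and> mns C (idt C X) (\<phi> \<cdot> y) = a \<cdot> \<kappa> \<and> \<kappa> \<cdot> a = idt C K"
proof -
  let ?al = "mns C (idt C X) (\<phi> \<cdot> y)"
  have "?al \<cdot> \<phi> = mns C (idt C X \<cdot> \<phi>) ((\<phi> \<cdot> y) \<cdot> \<phi>)" by (rule mns_cmp) (use y in simp_all)
  also have "\<dots> = zro C X X" using y by simp
  finally obtain a where a: "a \<in> Mor C" "Dom C a = X" "Cod C a = K" "?al = a \<cdot> \<kappa>"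
    using kfac[of ?al] y by auto
  have "\<kappa> \<cdot> ?al = mns C (\<kappa> \<cdot> idt C X) (\<kappa> \<cdot> (\<phi> \<cdot> y))" by (rule cmp_mns) (use y in simp_all)
  also have "\<dots> = \<kappa>" using y by simp
  finally have eq: "(\<kappa> \<cdot> a) \<cdot> \<kappa> = idt C K \<cdot> \<kappa>" using a by simp
  have k: "\<kappa> \<cdot> a = idt C K" by (rule kcancel) (use a eq in simp_all)
  show ?thesis by (intro exI[where x=a] conjI) (use a k in simp_all)
qed

lemma right_b: assumes y: "y \<in> Mor C" "Dom C y = X" "Cod C y = X" "\<phi> \<cdot> (y \<cdot> \<phi>) = \<phi>"
  shows "\<exists>b. b \<in> Mor C \<and> Dom C b = L \<and> Cod C b = X \<and> mns C (idt C X) (y \<cdot> \<phi>) = \<mu> \<cdot> b \<and> b \<cdot> \<mu> = idt C L"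
proof -
  let ?be = "mns C (idt C X) (y \<cdot> \<phi>)"
  have "\<phi> \<cdot> ?be = mns C (\<phi> \<cdot> idt C X) (\<phi> \<cdot> (y \<cdot> \<phi>))" by (rule cmp_mns) (use y in simp_all)
  also have "\<dots> = zro C X X" using y by simp
  finally obtain b where b: "b \<in> Mor C" "Dom C b = L" "Cod C b = X" "?be = \<mu> \<cdot> b"
    using cfac[of ?be] y by auto
  have "?be \<cdot> \<mu> = mns C (idt C X \<cdot> \<mu>) ((y \<cdot> \<phi>) \<cdot> \<mu>)" by (rule mns_cmp) (use y in simp_all)
  also have "\<dots> = \<mu>" using y by simp
  finally have eq: "\<mu> \<cdot> (b \<cdot> \<mu>) = \<mu> \<cdot> idt C L" using b by simp
  have k: "b \<cdot> \<mu> = idt C L" by (rule ccancel) (use b eq in simp_all)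
  show ?thesis by (intro exI[where x=b] conjI) (use b k in simp_all)
qed

end

context ctx begin

lemma three_imp:
  assumes psi: "\<psi> \<in> Mor C" "Dom C \<psi> = X" "Cod C \<psi> = X" "\<phi> \<cdot> (\<psi> \<cdot> \<phi>) = \<phi>"
    and i1: "is_inverse C (\<kappa> \<cdot> \<mu>) i1" and i2: "is_inverse C (\<kappa> \<cdot> str C \<kappa>) i2"
    and i3: "is_inverse C (str C \<mu> \<cdot> \<mu>) i3"
  defines "P \<equiv> mns C (idt C X) (cmp C (cmp C \<mu> i3) (str C \<mu>))"
    and "Q \<equiv> mns C (idt C X) (cmp C (cmp C (str C \<kappa>) i2) \<kappa>)"
    and "R \<equiv> mns C (idt C X) (cmp C (cmp C \<mu> i1) \<kappa>)"
  shows "is_MP_inverse C \<phi> ((P \<cdot> \<psi>) \<cdot> Q) \<and> is_group_inverse C \<phi> ((R \<cdot> \<psi>) \<cdot> R) \<and>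
         is_core_inverse C \<phi> ((R \<cdot> \<psi>) \<cdot> Q) \<and> is_dual_core_inverse C \<phi> ((P \<cdot> \<psi>) \<cdot> R)"
proof -
  from i1 have t1: "i1 \<in> Mor C" "Dom C i1 = L" "Cod C i1 = K" and e1: "\<kappa> \<cdot> (\<mu> \<cdot> i1) = idt C K" "i1 \<cdot> (\<kappa> \<cdot> \<mu>) = idt C L"
    by (auto simp: is_inverse_def Hom_iff)
  from i2 have t2: "i2 \<in> Mor C" "Dom C i2 = K" "Cod C i2 = K" and e2: "\<kappa> \<cdot> (str C \<kappa> \<cdot> i2) = idt C K" "i2 \<cdot> (\<kappa> \<cdot> str C \<kappa>) = idt C K"
    by (auto simp: is_inverse_def Hom_iff)
  from i3 have t3: "i3 \<in> Mor C" "Dom C i3 = L" "Cod C i3 = L" and e3: "str C \<mu> \<cdot> (\<mu> \<cdot> i3) = idt C L" "i3 \<cdot> (str C \<mu> \<cdot> \<mu>) = idt C L"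
    by (auto simp: is_inverse_def Hom_iff)
  have s2: "str C i2 = i2" using inv_sa[OF i2] by simp
  have s3: "str C i3 = i3" using inv_sa[OF i3] by simp
  note T = psi(1-3) t1 t2 t3
  note E = e1 e2 e3 ext2[OF e1(1)] ext2[OF e2(1)] ext2[OF e3(1)] ext2[OF e1(2)] ext2[OF e2(2)] ext2[OF e3(2)]
  have tP: "P \<in> Mor C" "Dom C P = X" "Cod C P = X" using T by (simp_all add: P_def)
  have tQ: "Q \<in> Mor C" "Dom C Q = X" "Cod C Q = X" using T by (simp_all add: Q_def)
  have tR: "R \<in> Mor C" "Dom C R = X" "Cod C R = X" using T by (simp_all add: R_def)
  note T = T tP tQ tR
  have fP1: "\<phi> \<cdot> P = \<phi>" using T by (simp add: P_def cmp_mns)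
  have fP2: "P \<cdot> \<mu> = zro C X L" using T E by (simp add: P_def mns_cmp)
  have fQ1: "Q \<cdot> \<phi> = \<phi>" using T by (simp add: Q_def mns_cmp)
  have fQ2: "\<kappa> \<cdot> Q = zro C K X" using T E by (simp add: Q_def cmp_mns)
  have fR1: "\<phi> \<cdot> R = \<phi>" using T by (simp add: R_def cmp_mns)
  have fR2: "R \<cdot> \<phi> = \<phi>" using T by (simp add: R_def mns_cmp)
  have fR3: "R \<cdot> \<mu> = zro C X L" using T E by (simp add: R_def mns_cmp)
  have fR4: "\<kappa> \<cdot> R = zro C K X" using T E by (simp add: R_def cmp_mns)
  note Z = fP2 fQ2 fR3 fR4 ext[OF fP2] ext[OF fQ2] ext[OF fR3] ext[OF fR4]
  have PP: "P \<cdot> P = P"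
  proof -
    have "P \<cdot> P = P \<cdot> mns C (idt C X) (cmp C (cmp C \<mu> i3) (str C \<mu>))" by (simp only: P_def)
    also have "\<dots> = P" using T Z by (simp add: cmp_mns)
    finally show ?thesis .
  qed
  have QQ: "Q \<cdot> Q = Q"
  proof -
    have "Q \<cdot> Q = mns C (idt C X) (cmp C (cmp C (str C \<kappa>) i2) \<kappa>) \<cdot> Q" by (simp only: Q_def)
    also have "\<dots> = Q" using T Z by (simp add: mns_cmp)
    finally show ?thesis .
  qed
  have RR: "R \<cdot> R = R"
  proof -
    have "R \<cdot> R = R \<cdot> mns C (idt C X) (cmp C (cmp C \<mu> i1) \<kappa>)" by (simp only: R_def)
    also have "\<dots> = R" using T Z by (simp add: cmp_mns)
    finally show ?thesis .
  qed
  have QR: "Q \<cdot> R = R"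
  proof -
    have "Q \<cdot> R = mns C (idt C X) (cmp C (cmp C (str C \<kappa>) i2) \<kappa>) \<cdot> R" by (simp only: Q_def)
    also have "\<dots> = R" using T Z by (simp add: mns_cmp)
    finally show ?thesis .
  qed
  have RP: "R \<cdot> P = R"
  proof -
    have "R \<cdot> P = R \<cdot> mns C (idt C X) (cmp C (cmp C \<mu> i3) (str C \<mu>))" by (simp only: P_def)
    also have "\<dots> = R" using T Z by (simp add: cmp_mns)
    finally show ?thesis .
  qed
  have PR: "P \<cdot> R = P"
  proof -
    have "P \<cdot> R = P \<cdot> mns C (idt C X) (cmp C (cmp C \<mu> i1) \<kappa>)" by (simp only: R_def)
    also have "\<dots> = P" using T Z by (simp add: cmp_mns)
    finally show ?thesis .
  qed
  have sP: "str C P = P" using T s3 by (simp add: P_def)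
  have sQ: "str C Q = Q" using T s2 by (simp add: Q_def)
  obtain a where a: "a \<in> Mor C" "Dom C a = X" "Cod C a = K" "mns C (idt C X) (\<phi> \<cdot> \<psi>) = a \<cdot> \<kappa>"
    using left_a[OF psi] by blast
  obtain b where b: "b \<in> Mor C" "Dom C b = L" "Cod C b = X" "mns C (idt C X) (\<psi> \<cdot> \<phi>) = \<mu> \<cdot> b"
    using right_b[OF psi] by blast
  have pQ: "\<phi> \<cdot> (\<psi> \<cdot> Q) = Q"
  proof -
    have "mns C (idt C X) (\<phi> \<cdot> \<psi>) \<cdot> Q = mns C Q (\<phi> \<cdot> (\<psi> \<cdot> Q))" using T by (simp add: mns_cmp)
    moreover have "mns C (idt C X) (\<phi> \<cdot> \<psi>) \<cdot> Q = zro C X X" using T Z a by simp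
    ultimately show ?thesis using mns_eq0[of Q "\<phi> \<cdot> (\<psi> \<cdot> Q)"] T by simp
  qed
  have pR: "\<phi> \<cdot> (\<psi> \<cdot> R) = R"
  proof -
    have "mns C (idt C X) (\<phi> \<cdot> \<psi>) \<cdot> R = mns C R (\<phi> \<cdot> (\<psi> \<cdot> R))" using T by (simp add: mns_cmp)
    moreover have "mns C (idt C X) (\<phi> \<cdot> \<psi>) \<cdot> R = zro C X X" using T Z a by simp
    ultimately show ?thesis using mns_eq0[of R "\<phi> \<cdot> (\<psi> \<cdot> R)"] T by simp
  qed
  have Pp: "P \<cdot> (\<psi> \<cdot> \<phi>) = P"
  proof -
    have "P \<cdot> mns C (idt C X) (\<psi> \<cdot> \<phi>) = mns C P (P \<cdot> (\<psi> \<cdot> \<phi>))" using T by (simp add: cmp_mns)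
    moreover have "P \<cdot> mns C (idt C X) (\<psi> \<cdot> \<phi>) = zro C X X" using T Z b by simp
    ultimately show ?thesis using mns_eq0[of P "P \<cdot> (\<psi> \<cdot> \<phi>)"] T by simp
  qed
  have Rp: "R \<cdot> (\<psi> \<cdot> \<phi>) = R"
  proof -
    have "R \<cdot> mns C (idt C X) (\<psi> \<cdot> \<phi>) = mns C R (R \<cdot> (\<psi> \<cdot> \<phi>))" using T by (simp add: cmp_mns)
    moreover have "R \<cdot> mns C (idt C X) (\<psi> \<cdot> \<phi>) = zro C X X" using T Z b by simp
    ultimately show ?thesis using mns_eq0[of R "R \<cdot> (\<psi> \<cdot> \<phi>)"] T by simp
  qed
  note S = fP1 fQ1 fR1 fR2 PP QQ RR QR RP PR ext[OF fP1] ext[OF fQ1] ext[OF fR1] ext[OF fR2]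
     ext[OF PP] ext[OF QQ] ext[OF RR] ext[OF QR] ext[OF RP] ext[OF PR]
     pQ pR Pp Rp ext2[OF pQ] ext2[OF pR] ext2[OF Pp] ext2[OF Rp]
  have c1: "\<phi> \<cdot> ((P \<cdot> \<psi>) \<cdot> Q) = Q" using T S by simp
  have c2: "((P \<cdot> \<psi>) \<cdot> Q) \<cdot> \<phi> = P" using T S by simp
  have g1: "\<phi> \<cdot> ((R \<cdot> \<psi>) \<cdot> R) = R" using T S by simp
  have g2: "((R \<cdot> \<psi>) \<cdot> R) \<cdot> \<phi> = R" using T S by simp
  have k1: "\<phi> \<cdot> ((R \<cdot> \<psi>) \<cdot> Q) = Q" using T S by simp
  have d1: "((P \<cdot> \<psi>) \<cdot> R) \<cdot> \<phi> = P" using T S by simp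
  have MP: "is_MP_inverse C \<phi> ((P \<cdot> \<psi>) \<cdot> Q)"
    unfolding is_MP_inverse_def Hom_iff c1 c2 using T S sP sQ by simp
  have GR: "is_group_inverse C \<phi> ((R \<cdot> \<psi>) \<cdot> R)"
    unfolding is_group_inverse_def Hom_iff g1 g2 using T S by simp
  have CO: "is_core_inverse C \<phi> ((R \<cdot> \<psi>) \<cdot> Q)"
    unfolding is_core_inverse_def Hom_iff k1 using T S sQ by simp
  have DC: "is_dual_core_inverse C \<phi> ((P \<cdot> \<psi>) \<cdot> R)"
    unfolding is_dual_core_inverse_def Hom_iff d1 using T S sP by simp
  show ?thesis using MP GR CO DC by blast
qed

end

context ctx begin

lemma inv_kk: assumes y: "y \<in> Mor C" "Dom C y = X" "Cod C y = X" "\<phi> \<cdot> (y \<cdot> \<phi>) = \<phi>" "str C (\<phi> \<cdot> y) = \<phi> \<cdot> y"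
  shows "invertible C (\<kappa> \<cdot> str C \<kappa>)"
proof -
  obtain a where a: "a \<in> Mor C" "Dom C a = X" "Cod C a = K" "mns C (idt C X) (\<phi> \<cdot> y) = a \<cdot> \<kappa>" "\<kappa> \<cdot> a = idt C K"
    using left_a[OF y(1-4)] by blast
  have "str C \<kappa> \<cdot> str C a = str C (a \<cdot> \<kappa>)" using a by simp
  also have "\<dots> = str C (mns C (idt C X) (\<phi> \<cdot> y))" using a by simp
  also have "\<dots> = mns C (idt C X) (str C (\<phi> \<cdot> y))" using y by (simp del: str_cmp)
  also have "\<dots> = a \<cdot> \<kappa>" using y a by simp
  finally have "str C \<kappa> \<cdot> str C a = a \<cdot> \<kappa>" .
  from inv_gen[of \<kappa> a K X, OF _ _ _ _ _ _ a(5) this] a show ?thesis by (auto simp: invertible_def)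
qed

lemma inv_mm: assumes y: "y \<in> Mor C" "Dom C y = X" "Cod C y = X" "\<phi> \<cdot> (y \<cdot> \<phi>) = \<phi>" "str C (y \<cdot> \<phi>) = y \<cdot> \<phi>"
  shows "invertible C (str C \<mu> \<cdot> \<mu>)"
proof -
  obtain b where b: "b \<in> Mor C" "Dom C b = L" "Cod C b = X" "mns C (idt C X) (y \<cdot> \<phi>) = \<mu> \<cdot> b" "b \<cdot> \<mu> = idt C L"
    using right_b[OF y(1-4)] by blast
  have 1: "str C \<mu> \<cdot> str C b = idt C L"
  proof -
    have "str C \<mu> \<cdot> str C b = str C (b \<cdot> \<mu>)" using b(1-3) by simp
    also have "\<dots> = idt C L" using b by (simp del: str_cmp)
    finally show ?thesis .
  qed
  have "str C (str C \<mu>) \<cdot> str C (str C b) = \<mu> \<cdot> b" using b by simp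
  also have "\<dots> = mns C (idt C X) (y \<cdot> \<phi>)" using b by simp
  also have "\<dots> = mns C (idt C X) (str C (y \<cdot> \<phi>))" using y by simp
  also have "\<dots> = str C (mns C (idt C X) (y \<cdot> \<phi>))" using y by (simp del: str_cmp)
  also have "\<dots> = str C (\<mu> \<cdot> b)" using b by simp
  also have "\<dots> = str C b \<cdot> str C \<mu>" using b by simp
  finally have 2: "str C (str C \<mu>) \<cdot> str C (str C b) = str C b \<cdot> str C \<mu>" .
  from inv_gen[of "str C \<mu>" "str C b" L X, OF _ _ _ _ _ _ 1 2] b
  have "is_inverse C (str C \<mu> \<cdot> str C (str C \<mu>)) (str C (str C b) \<cdot> str C b)" by simp
  thus ?thesis using b by (auto simp: invertible_def)
qed

lemma inv_km: assumes y: "y \<in> Mor C" "Dom C y = X" "Cod C y = X" "\<phi> \<cdot> (y \<cdot> \<phi>) = \<phi>" "\<phi> \<cdot> y = y \<cdot> \<phi>"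
  shows "invertible C (\<kappa> \<cdot> \<mu>)"
proof -
  obtain a where a: "a \<in> Mor C" "Dom C a = X" "Cod C a = K" "mns C (idt C X) (\<phi> \<cdot> y) = a \<cdot> \<kappa>" "\<kappa> \<cdot> a = idt C K"
    using left_a[OF y(1-4)] by blast
  obtain b where b: "b \<in> Mor C" "Dom C b = L" "Cod C b = X" "mns C (idt C X) (y \<cdot> \<phi>) = \<mu> \<cdot> b" "b \<cdot> \<mu> = idt C L"
    using right_b[OF y(1-4)] by blast
  have "a \<cdot> \<kappa> = \<mu> \<cdot> b" using a(4) b(4) y(5) by simp
  from inv_gen2[of \<kappa> a K X \<mu> b L, OF _ _ _ _ _ _ _ _ _ _ _ _ a(5) b(5) this] a b
  show ?thesis by (auto simp: invertible_def)
qed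

lemma reg: assumes y: "y \<in> Mor C" "Dom C y = X" "Cod C y = X" "\<phi> \<cdot> (y \<cdot> \<phi>) = \<phi>"
  shows "regular C \<phi>"
  unfolding regular_def Hom_iff using y by (intro bexI[where x=y]) (simp_all add: Hom_iff)

lemma MP_facts: assumes "is_MP_inverse C \<phi> y"
  shows "y \<in> Mor C" "Dom C y = X" "Cod C y = X" "\<phi> \<cdot> (y \<cdot> \<phi>) = \<phi>" "str C (\<phi> \<cdot> y) = \<phi> \<cdot> y" "str C (y \<cdot> \<phi>) = y \<cdot> \<phi>"
proof -
  from assms show t: "y \<in> Mor C" "Dom C y = X" "Cod C y = X" "str C (\<phi> \<cdot> y) = \<phi> \<cdot> y" "str C (y \<cdot> \<phi>) = y \<cdot> \<phi>"
    by (auto simp: is_MP_inverse_def Hom_iff simp del: str_cmp)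
  from assms have "(\<phi> \<cdot> y) \<cdot> \<phi> = \<phi>" by (simp add: is_MP_inverse_def)
  thus "\<phi> \<cdot> (y \<cdot> \<phi>) = \<phi>" using t by simp
qed

lemma group_facts: assumes "is_group_inverse C \<phi> y"
  shows "y \<in> Mor C" "Dom C y = X" "Cod C y = X" "\<phi> \<cdot> (y \<cdot> \<phi>) = \<phi>" "\<phi> \<cdot> y = y \<cdot> \<phi>"
proof -
  from assms show t: "y \<in> Mor C" "Dom C y = X" "Cod C y = X" "\<phi> \<cdot> y = y \<cdot> \<phi>"
    by (auto simp: is_group_inverse_def Hom_iff)
  from assms have "(\<phi> \<cdot> y) \<cdot> \<phi> = \<phi>" unfolding is_group_inverse_def by blast
  thus "\<phi> \<cdot> (y \<cdot> \<phi>) = \<phi>" using t(1-3) by simp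
qed

abbreviation "c3 \<equiv> regular C \<phi> \<and> invertible C (\<kappa> \<cdot> \<mu>) \<and> invertible C (\<kappa> \<cdot> str C \<kappa>) \<and> invertible C (str C \<mu> \<cdot> \<mu>)"

lemma two_three: assumes "MP_invertible C \<phi>" "group_invertible C \<phi>" shows c3
proof -
  obtain y where y: "is_MP_inverse C \<phi> y" using assms(1) by (auto simp: MP_invertible_def)
  obtain z where z: "is_group_inverse C \<phi> z" using assms(2) by (auto simp: group_invertible_def)
  note fy = MP_facts[OF y] and fz = group_facts[OF z]
  show ?thesis using reg[OF fy(1-4)] inv_kk[OF fy(1-5)] inv_mm[OF fy(1-4) fy(6)] inv_km[OF fz] by blast
qed

lemma one_three: assumes "core_invertible C \<phi>" "dual_core_invertible C \<phi>" shows c3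
proof -
  obtain y where y: "is_core_inverse C \<phi> y" using assms(1) by (auto simp: core_invertible_def)
  obtain z where z: "is_dual_core_inverse C \<phi> z" using assms(2) by (auto simp: dual_core_invertible_def)
  note fy = core_facts[OF ty(4-6) y] and fz = dcore_facts[OF ty(4-6) z]
  note gy = group_facts[OF fy(6)]
  show ?thesis using reg[OF fy(1-4)] inv_kk[OF fy(1-4) fy(8)] inv_mm[OF fz(1-4) fz(8)] inv_km[OF gy] by blast
qed

lemma three_all: assumes c3 and psi: "\<psi> \<in> Mor C" "Dom C \<psi> = X" "Cod C \<psi> = X" "\<phi> \<cdot> (\<psi> \<cdot> \<phi>) = \<phi>"
  defines "P \<equiv> mns C (idt C X) (cmp C (cmp C \<mu> (inverse C (cmp C (str C \<mu>) \<mu>))) (str C \<mu>))"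
    and "Q \<equiv> mns C (idt C X) (cmp C (cmp C (str C \<kappa>) (inverse C (cmp C \<kappa> (str C \<kappa>)))) \<kappa>)"
    and "R \<equiv> mns C (idt C X) (cmp C (cmp C \<mu> (inverse C (cmp C \<kappa> \<mu>))) \<kappa>)"
  shows "is_MP_inverse C \<phi> ((P \<cdot> \<psi>) \<cdot> Q) \<and> is_group_inverse C \<phi> ((R \<cdot> \<psi>) \<cdot> R) \<and>
         is_core_inverse C \<phi> ((R \<cdot> \<psi>) \<cdot> Q) \<and> is_dual_core_inverse C \<phi> ((P \<cdot> \<psi>) \<cdot> R)"
  unfolding P_def Q_def R_def
  by (rule three_imp[OF psi]) (use assms(1) inverse_is in simp_all)

lemma three_exists: assumes c3
  shows "\<exists>\<psi>. \<psi> \<in> Mor C \<and> Dom C \<psi> = X \<and> Cod C \<psi> = X \<and> \<phi> \<cdot> (\<psi> \<cdot> \<phi>) = \<phi>"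
proof -
  from assms obtain y where "y \<in> Hom C X X" "(\<phi> \<cdot> y) \<cdot> \<phi> = \<phi>" by (auto simp: regular_def)
  thus ?thesis by (intro exI[where x=y]) (auto simp: Hom_iff)
qed

end

theorem corollary3p5:
  fixes C :: "('o, 'm, 'x) icat_scheme"
    and X K L :: 'o and \<phi> \<kappa> \<mu> :: 'm
  assumes cat: "additive_inv_category C"
    and obs: "X \<in> Ob C" "K \<in> Ob C" "L \<in> Ob C"
    and phi: "\<phi> \<in> Hom C X X"
    and kap: "\<kappa> \<in> Hom C K X" "is_kernel C \<phi> \<kappa>"
    and lam: "\<mu> \<in> Hom C X L" "is_cokernel C \<phi> \<mu>"
  shows "((core_invertible C \<phi> \<and> dual_core_invertible C \<phi>) \<longleftrightarrow>
            (MP_invertible C \<phi> \<and> group_invertible C \<phi>)) \<and>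
         ((MP_invertible C \<phi> \<and> group_invertible C \<phi>) \<longleftrightarrow>
            (regular C \<phi> \<and> invertible C (cmp C \<kappa> \<mu>) \<and>
             invertible C (cmp C \<kappa> (str C \<kappa>)) \<and> invertible C (cmp C (str C \<mu>) \<mu>))) \<and>
         ((core_invertible C \<phi> \<and> dual_core_invertible C \<phi>) \<longrightarrow>
           (\<forall>\<psi>\<in>Hom C X X. cmp C (cmp C \<phi> \<psi>) \<phi> = \<phi> \<longrightarrow>
             (let P = mns C (idt C X) (cmp C (cmp C \<mu> (inverse C (cmp C (str C \<mu>) \<mu>))) (str C \<mu>));
                  Q = mns C (idt C X) (cmp C (cmp C (str C \<kappa>) (inverse C (cmp C \<kappa> (str C \<kappa>)))) \<kappa>);
                  R = mns C (idt C X) (cmp C (cmp C \<mu> (inverse C (cmp C \<kappa> \<mu>))) \<kappa>)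
              in MP_inv C \<phi> = cmp C (cmp C P \<psi>) Q \<and>
                 group_inv C \<phi> = cmp C (cmp C R \<psi>) R \<and>
                 core_inv C \<phi> = cmp C (cmp C R \<psi>) Q \<and>
                 dual_core_inv C \<phi> = cmp C (cmp C P \<psi>) R)))"
proof -
  interpret ctx C X K L \<phi> \<kappa> \<mu>
    using assms by (intro ctx.intro aic.intro ctx_axioms.intro) auto
  have A: "core_invertible C \<phi> \<and> dual_core_invertible C \<phi> \<Longrightarrow> c3" using one_three by blast
  have B: "MP_invertible C \<phi> \<and> group_invertible C \<phi> \<Longrightarrow> c3" using two_three by blast
  have Cc: "(core_invertible C \<phi> \<and> dual_core_invertible C \<phi>) \<and> (MP_invertible C \<phi> \<and> group_invertible C \<phi>)"
    if h: c3 for dummy :: bool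
  proof -
    obtain \<psi> where p: "\<psi> \<in> Mor C" "Dom C \<psi> = X" "Cod C \<psi> = X" "cmp C \<phi> (cmp C \<psi> \<phi>) = \<phi>"
      using three_exists[OF h] by blast
    from three_all[OF h p] show ?thesis
      unfolding core_invertible_def dual_core_invertible_def MP_invertible_def group_invertible_def by blast
  qed
  have D: "MP_inv C \<phi> = cmp C (cmp C P \<psi>) Q \<and> group_inv C \<phi> = cmp C (cmp C R \<psi>) R \<and>
                 core_inv C \<phi> = cmp C (cmp C R \<psi>) Q \<and> dual_core_inv C \<phi> = cmp C (cmp C P \<psi>) R"
    if h: "core_invertible C \<phi> \<and> dual_core_invertible C \<phi>" and psi: "\<psi> \<in> Hom C X X" "cmp C (cmp C \<phi> \<psi>) \<phi> = \<phi>"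
    and P: "P = mns C (idt C X) (cmp C (cmp C \<mu> (inverse C (cmp C (str C \<mu>) \<mu>))) (str C \<mu>))"
    and Q: "Q = mns C (idt C X) (cmp C (cmp C (str C \<kappa>) (inverse C (cmp C \<kappa> (str C \<kappa>)))) \<kappa>)"
    and R: "R = mns C (idt C X) (cmp C (cmp C \<mu> (inverse C (cmp C \<kappa> \<mu>))) \<kappa>)"
    for \<psi> P Q R
  proof -
    have c3: c3 using A h by blast
    have p: "\<psi> \<in> Mor C" "Dom C \<psi> = X" "Cod C \<psi> = X" "cmp C \<phi> (cmp C \<psi> \<phi>) = \<phi>"
      using psi by (auto simp: Hom_iff)
    note th = three_all[OF c3 p, folded P Q R]
    have 1: "MP_inv C \<phi> = cmp C (cmp C P \<psi>) Q" unfolding MP_inv_def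
      by (rule the_equality) (use th MP_unique[OF ty(4-6)] in blast)+
    have 2: "group_inv C \<phi> = cmp C (cmp C R \<psi>) R" unfolding group_inv_def
      by (rule the_equality) (use th group_unique[OF ty(4-6)] in blast)+
    have 3: "core_inv C \<phi> = cmp C (cmp C R \<psi>) Q" unfolding core_inv_def
      by (rule the_equality) (use th core_unique[OF ty(4-6)] in blast)+
    have 4: "dual_core_inv C \<phi> = cmp C (cmp C P \<psi>) R" unfolding dual_core_inv_def
      by (rule the_equality) (use th dcore_unique[OF ty(4-6)] in blast)+
    show ?thesis using 1 2 3 4 by blast
  qed
  show ?thesis
    unfolding Let_def
    using A B Cc D by blast
qed

end
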